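(* Let $\mu$ be a pure-state ensemble on $\mathbb{C}^d$ and let $D(I)$ be its information-disturbance frontier. Let $I$ be an achievable information value lying on the upward-sloping portion of the frontier, i.e. $D(I')>D(I)$ for every achievable $I'>I$. If there is a measurement procedure achieving information gain $I$ and disturbance $D(I)$, then there is a measurement procedure with one-term conditional dynamics achieving information gain $I$ and disturbance $D(I)$.
   Context: A measurement procedure on $\mathbb{C}^d$ consists of a finite POVM $\{F_b\}$ (positive semidefinite, $\sum_b F_b=I$) together with operators $A_{bi}$ (finitely many for each $b$) with $\sum_i A_{bi}^\dagger A_{bi}=F_b$. It has one-term conditional dynamics if for each $b$ there is a single operator $A_b$ (so $A_b^\dagger A_b=F_b$). With $p(b|\psi)=\langle\psi|F_b|\psi\rangle$, $p(b)=\int d\mu(\psi)p(b|\psi)$, the information gain is $-\sum_b p(b)\log p(b)+\int d\mu(\psi)\sum_b p(b|\psi)\log p(b|\psi)$, and the disturbance is $1-\int d\mu(\psi)\sum_{b,i}|\langle\psi|A_{bi}|\psi\rangle|^2$. $D(I)$ is the infimum of the disturbance over all measurement procedures with information gain exactly $I$. *)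

theory Defs
  imports "HOL-Analysis.Analysis" "HOL-Probability.Probability"
begin

definition adj :: "complex ^ 'd ^ 'd \<Rightarrow> complex ^ 'd ^ 'd" where
  "adj A = (\<chi> i j. cnj (A $ j $ i))"

definition qform :: "complex ^ 'd ^ 'd \<Rightarrow> complex ^ 'd \<Rightarrow> complex" where
  "qform A \<psi> = (\<Sum>i\<in>UNIV. cnj (\<psi> $ i) * (A *v \<psi>) $ i)"

definition psd :: "complex ^ 'd ^ 'd \<Rightarrow> bool" where
  "psd A \<longleftrightarrow> (\<forall>v. Im (qform A v) = 0 \<and> Re (qform A v) \<ge> 0)"

definition pure_state_ensemble :: "(complex ^ 'd) measure \<Rightarrow> bool" where
  "pure_state_ensemble \<mu> \<longleftrightarrow> prob_space \<mu> \<and> sets \<mu> = sets borel \<and>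
     (AE \<psi> in \<mu>. norm \<psi> = 1)"

record ('d::finite) mproc =
  outcomes :: "nat set"
  povm :: "nat \<Rightarrow> complex ^ 'd ^ 'd"
  kidx :: "nat \<Rightarrow> nat set"
  kraus :: "nat \<Rightarrow> nat \<Rightarrow> complex ^ 'd ^ 'd"

definition measurement_procedure :: "'d::finite mproc \<Rightarrow> bool" where
  "measurement_procedure P \<longleftrightarrow>
     finite (outcomes P) \<and>
     (\<forall>b\<in>outcomes P. psd (povm P b)) \<and>
     (\<Sum>b\<in>outcomes P. povm P b) = mat 1 \<and>
     (\<forall>b\<in>outcomes P. finite (kidx P b) \<and>
        (\<Sum>i\<in>kidx P b. adj (kraus P b i) ** kraus P b i) = povm P b)"

definition one_term :: "'d::finite mproc \<Rightarrow> bool" where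
  "one_term P \<longleftrightarrow> (\<forall>b\<in>outcomes P. \<exists>i. kidx P b = {i})"

definition pcond :: "'d::finite mproc \<Rightarrow> nat \<Rightarrow> complex ^ 'd \<Rightarrow> real" where
  "pcond P b \<psi> = Re (qform (povm P b) \<psi>)"

definition pout :: "(complex ^ 'd) measure \<Rightarrow> 'd::finite mproc \<Rightarrow> nat \<Rightarrow> real" where
  "pout \<mu> P b = (\<integral>\<psi>. pcond P b \<psi> \<partial>\<mu>)"

text \<open>Information gain (natural logarithm; 0 log 0 = 0 since ln 0 = 0 in Isabelle).\<close>
definition info_gain :: "(complex ^ 'd) measure \<Rightarrow> 'd::finite mproc \<Rightarrow> real" where
  "info_gain \<mu> P =
     - (\<Sum>b\<in>outcomes P. pout \<mu> P b * ln (pout \<mu> P b))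
     + (\<integral>\<psi>. (\<Sum>b\<in>outcomes P. pcond P b \<psi> * ln (pcond P b \<psi>)) \<partial>\<mu>)"

definition disturbance :: "(complex ^ 'd) measure \<Rightarrow> 'd::finite mproc \<Rightarrow> real" where
  "disturbance \<mu> P =
     1 - (\<integral>\<psi>. (\<Sum>b\<in>outcomes P. \<Sum>i\<in>kidx P b. (cmod (qform (kraus P b i) \<psi>))^2) \<partial>\<mu>)"

definition achievable :: "(complex ^ 'd) measure \<Rightarrow> real \<Rightarrow> bool" where
  "achievable \<mu> I \<longleftrightarrow>
     (\<exists>P::'d::finite mproc. measurement_procedure P \<and> info_gain \<mu> P = I)"

definition Dfront :: "(complex ^ 'd) measure \<Rightarrow> real \<Rightarrow> real" where
  "Dfront \<mu> I = Inf {disturbance \<mu> P | P::'d::finite mproc.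
                         measurement_procedure P \<and> info_gain \<mu> P = I}"

end

theory Submission
  imports Defs
begin

lemma xlnx_bound: "0 \<le> (x::real) \<Longrightarrow> x \<le> 1 \<Longrightarrow> \<bar>x * ln x\<bar> \<le> 1"
proof (cases "x = 0")
  case False
  assume h: "0 \<le> x" "x \<le> 1"
  with False have xp: "0 < x" by simp
  have "ln x \<le> 0" using h xp by simp
  hence a: "x * ln x \<le> 0" using h by (simp add: mult_nonneg_nonpos)
  have "ln (1/x) \<le> 1/x - 1" using xp by (intro ln_le_minus_one) simp
  hence "- ln x \<le> 1/x - 1" using xp by (simp add: ln_div)
  hence "x * (- ln x) \<le> x * (1/x - 1)" using h by (intro mult_left_mono) auto
  moreover have "x * (1/x - 1) = 1 - x" using xp by (simp add: right_diff_distrib)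
  ultimately have "- (x * ln x) \<le> 1 - x" by simp
  thus ?thesis using a h by linarith
qed simp

lemma gibbs_pt: "0 \<le> (a::real) \<Longrightarrow> 0 < c \<Longrightarrow> a * ln a - a * ln c \<ge> a - c"
proof (cases "a = 0")
  case False
  assume h: "0 \<le> a" "0 < c"
  hence ap: "0 < a" using False by simp
  have "ln (c/a) \<le> c/a - 1" using ap h by (intro ln_le_minus_one) simp
  hence "ln c - ln a \<le> c/a - 1" using ap h by (simp add: ln_div)
  hence "a * (ln c - ln a) \<le> a * (c/a - 1)" using ap by (intro mult_left_mono) auto
  moreover have "a * (c/a - 1) = c - a" using ap by (simp add: right_diff_distrib)
  ultimately show ?thesis by (simp add: right_diff_distrib)
qed simp

lemma integrable01:
  fixes g :: "'a \<Rightarrow> real"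
  assumes "prob_space M" "g \<in> borel_measurable M" "AE x in M. 0 \<le> g x \<and> g x \<le> 1"
  shows "integrable M g" "integrable M (\<lambda>x. g x * ln (g x))"
proof -
  interpret prob_space M by fact
  show "integrable M g"
    by (rule integrable_const_bound[where B=1]) (use assms(3) in auto, rule assms(2))
  show "integrable M (\<lambda>x. g x * ln (g x))"
  proof (rule integrable_const_bound[where B=1])
    show "AE x in M. norm (g x * ln (g x)) \<le> 1" using assms(3) xlnx_bound by auto
    have [measurable]: "g \<in> borel_measurable M" by fact
    show "(\<lambda>x. g x * ln (g x)) \<in> borel_measurable M" by measurable
  qed
qed

lemma gibbs_ptwise:
  fixes f :: "'b \<Rightarrow> real" and Q :: "'b \<Rightarrow> real"
  assumes fin: "finite K" and S: "S \<subseteq> K" and nn: "\<And>i. i \<in> K \<Longrightarrow> 0 \<le> f i"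
    and z: "\<And>i. i \<in> K - S \<Longrightarrow> f i = 0" and Qp: "\<And>i. i \<in> S \<Longrightarrow> 0 < Q i"
    and P: "P = (\<Sum>i\<in>S. Q i)"
  shows "(\<Sum>i\<in>K. f i * ln (f i)) - (\<Sum>i\<in>K. f i) * ln (\<Sum>i\<in>K. f i)
     \<ge> (\<Sum>i\<in>S. f i * (ln (Q i) - ln P))"
proof -
  have finS: "finite S" using fin S finite_subset by auto
  have e1: "(\<Sum>i\<in>K. f i * ln (f i)) = (\<Sum>i\<in>S. f i * ln (f i))"
    by (rule sum.mono_neutral_right[OF fin S]) (use z in auto)
  have e2: "(\<Sum>i\<in>K. f i) = (\<Sum>i\<in>S. f i)"
    by (rule sum.mono_neutral_right[OF fin S]) (use z in auto)
  define p where "p = (\<Sum>i\<in>S. f i)"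
  have p0: "p \<ge> 0" unfolding p_def using nn S by (intro sum_nonneg) auto
  show ?thesis
  proof (cases "p = 0")
    case True
    have "(\<Sum>i\<in>S. f i) = 0" using True p_def by simp
    moreover have "\<forall>i\<in>S. 0 \<le> f i" using nn S by blast
    ultimately have "\<forall>i\<in>S. f i = 0" using sum_nonneg_eq_0_iff[OF finS] by blast
    thus ?thesis using e1 e2 by simp
  next
    case False
    hence pp: "p > 0" using p0 by simp
    have "S \<noteq> {}" using False unfolding p_def by auto
    hence Ppos: "P > 0" unfolding P using Qp finS by (intro sum_pos) auto
    have key: "f i * ln (f i) - f i * ln p - f i * (ln (Q i) - ln P) \<ge> f i - p * Q i / P" if i: "i \<in> S" for i
    proof -
      have c: "p * Q i / P > 0" using pp Ppos Qp[OF i] by simp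
      have "ln (p * Q i / P) = ln p + ln (Q i) - ln P"
        using pp Ppos Qp[OF i] by (simp add: ln_mult ln_div)
      moreover have "f i * ln (f i) - f i * ln (p * Q i / P) \<ge> f i - p * Q i / P"
        using gibbs_pt[OF nn c] i S by auto
      ultimately show ?thesis by (simp add: right_diff_distrib distrib_left)
    qed
    have "(\<Sum>i\<in>S. f i * ln (f i) - f i * ln p - f i * (ln (Q i) - ln P)) \<ge> (\<Sum>i\<in>S. f i - p * Q i / P)"
      by (rule sum_mono) (use key in auto)
    also have "(\<Sum>i\<in>S. f i - p * Q i / P) = p - p * (\<Sum>i\<in>S. Q i) / P"
      unfolding sum_subtractf p_def[symmetric] by (simp add: sum_divide_distrib sum_distrib_left)
    also have "\<dots> = 0" using Ppos P by simp
    finally have "0 \<le> (\<Sum>i\<in>S. f i * ln (f i)) - (\<Sum>i\<in>S. f i * ln p) - (\<Sum>i\<in>S. f i * (ln (Q i) - ln P))"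
      by (simp only: sum_subtractf)
    moreover have "(\<Sum>i\<in>S. f i * ln p) = p * ln p" unfolding p_def by (simp add: sum_distrib_right)
    ultimately show ?thesis using e1 e2 p_def by simp
  qed
qed

lemma gibbs_int:
  fixes M :: "'a measure" and f :: "'b \<Rightarrow> 'a \<Rightarrow> real"
  assumes ps: "prob_space M" and fin: "finite K"
   and meas: "\<And>i. i\<in>K \<Longrightarrow> f i \<in> borel_measurable M"
   and nn: "\<And>i x. i\<in>K \<Longrightarrow> 0 \<le> f i x"
   and le1: "AE x in M. (\<Sum>i\<in>K. f i x) \<le> 1"
  shows "(\<Sum>i\<in>K. (\<integral>x. f i x \<partial>M) * ln (\<integral>x. f i x \<partial>M))
      - (\<integral>x. (\<Sum>i\<in>K. f i x) \<partial>M) * ln (\<integral>x. (\<Sum>i\<in>K. f i x) \<partial>M)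
    \<le> (\<integral>x. (\<Sum>i\<in>K. f i x * ln (f i x)) \<partial>M)
      - (\<integral>x. (\<Sum>i\<in>K. f i x) * ln (\<Sum>i\<in>K. f i x) \<partial>M)"
proof -
  interpret prob_space M by fact
  have b01: "AE x in M. 0 \<le> f i x \<and> f i x \<le> 1" if i: "i\<in>K" for i
    using le1
  proof eventually_elim
    case (elim x)
    have "f i x \<le> (\<Sum>i\<in>K. f i x)" by (rule member_le_sum) (use i nn fin in auto)
    thus ?case using elim nn[OF i] by simp
  qed
  have int_f: "integrable M (f i)" if "i\<in>K" for i
    using integrable01(1)[OF ps meas[OF that] b01[OF that]] .
  have int_fl: "integrable M (\<lambda>x. f i x * ln (f i x))" if "i\<in>K" for i
    using integrable01(2)[OF ps meas[OF that] b01[OF that]] .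
  have measp: "(\<lambda>x. \<Sum>i\<in>K. f i x) \<in> borel_measurable M"
    by (rule borel_measurable_sum) (use meas in auto)
  have bp: "AE x in M. 0 \<le> (\<Sum>i\<in>K. f i x) \<and> (\<Sum>i\<in>K. f i x) \<le> 1"
    using le1 by eventually_elim (use nn in \<open>auto intro: sum_nonneg\<close>)
  have int_pl: "integrable M (\<lambda>x. (\<Sum>i\<in>K. f i x) * ln (\<Sum>i\<in>K. f i x))"
    using integrable01(2)[OF ps measp bp] .
  define Q where "Q i = (\<integral>x. f i x \<partial>M)" for i
  have intp: "(\<integral>x. (\<Sum>i\<in>K. f i x) \<partial>M) = (\<Sum>i\<in>K. Q i)"
    unfolding Q_def using Bochner_Integration.integral_sum[where I=K and f=f, OF int_f] int_f by simp
  define S where "S = {i\<in>K. Q i > 0}"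
  have SK: "S \<subseteq> K" unfolding S_def by auto
  have Qnn: "Q i \<ge> 0" if "i \<in> K" for i
    unfolding Q_def by (rule integral_nonneg_AE) (use nn that in auto)
  have Q0: "Q i = 0" if "i \<in> K - S" for i using Qnn[of i] that unfolding S_def by auto
  have AEz: "AE x in M. \<forall>i\<in>K - S. f i x = 0"
  proof (rule AE_finite_allI)
    show "finite (K - S)" using fin by simp
    fix i assume i: "i \<in> K - S"
    have "integral\<^sup>L M (f i) = 0" using Q0[OF i] unfolding Q_def by simp
    thus "AE x in M. f i x = 0"
      using integral_nonneg_eq_0_iff_AE[of M "f i"] int_f nn i by auto
  qed
  define P where "P = (\<Sum>i\<in>S. Q i)"
  have PK: "P = (\<Sum>i\<in>K. Q i)" unfolding P_def
    by (rule sum.mono_neutral_left[OF fin SK]) (use Q0 in auto)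
  have QlK: "(\<Sum>i\<in>S. Q i * ln (Q i)) = (\<Sum>i\<in>K. Q i * ln (Q i))"
    by (rule sum.mono_neutral_left[OF fin SK]) (use Q0 in auto)
  have pt: "AE x in M. (\<Sum>i\<in>S. f i x * (ln (Q i) - ln P))
     \<le> (\<Sum>i\<in>K. f i x * ln (f i x)) - (\<Sum>i\<in>K. f i x) * ln (\<Sum>i\<in>K. f i x)"
    using AEz
  proof eventually_elim
    case (elim x)
    show ?case
      by (rule gibbs_ptwise[OF fin SK]) (use elim nn P_def in \<open>auto simp: S_def\<close>)
  qed
  have "(\<integral>x. (\<Sum>i\<in>S. f i x * (ln (Q i) - ln P)) \<partial>M)
     \<le> (\<integral>x. (\<Sum>i\<in>K. f i x * ln (f i x)) - (\<Sum>i\<in>K. f i x) * ln (\<Sum>i\<in>K. f i x) \<partial>M)"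
  proof (rule integral_mono_AE[OF _ _ pt])
    show "integrable M (\<lambda>x. \<Sum>i\<in>S. f i x * (ln (Q i) - ln P))"
      by (rule Bochner_Integration.integrable_sum, rule Bochner_Integration.integrable_mult_left) (use int_f SK in auto)
  qed (use int_f int_fl int_pl SK in auto)
  also have "\<dots> = (\<integral>x. (\<Sum>i\<in>K. f i x * ln (f i x)) \<partial>M)
      - (\<integral>x. (\<Sum>i\<in>K. f i x) * ln (\<Sum>i\<in>K. f i x) \<partial>M)"
    by (rule Bochner_Integration.integral_diff) (use int_fl int_pl in auto)
  finally have main: "(\<integral>x. (\<Sum>i\<in>S. f i x * (ln (Q i) - ln P)) \<partial>M) \<le> \<dots>" .
  have "(\<integral>x. (\<Sum>i\<in>S. f i x * (ln (Q i) - ln P)) \<partial>M) = (\<Sum>i\<in>S. Q i * (ln (Q i) - ln P))"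
  proof -
    have "(\<integral>x. (\<Sum>i\<in>S. f i x * (ln (Q i) - ln P)) \<partial>M) = (\<Sum>i\<in>S. (\<integral>x. f i x * (ln (Q i) - ln P) \<partial>M))"
      by (rule Bochner_Integration.integral_sum) (use int_f SK in auto)
    also have "\<dots> = (\<Sum>i\<in>S. Q i * (ln (Q i) - ln P))"
      by (rule sum.cong) (use int_f SK in \<open>auto simp: Q_def\<close>)
    finally show ?thesis .
  qed
  also have "\<dots> = (\<Sum>i\<in>S. Q i * ln (Q i)) - P * ln P"
    unfolding P_def by (simp add: right_diff_distrib sum_subtractf sum_distrib_right)
  finally have "(\<Sum>i\<in>K. Q i * ln (Q i)) - P * ln P \<le> (\<integral>x. (\<Sum>i\<in>K. f i x * ln (f i x)) \<partial>M)
      - (\<integral>x. (\<Sum>i\<in>K. f i x) * ln (\<Sum>i\<in>K. f i x) \<partial>M)" using main QlK by simp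
  thus ?thesis using intp PK unfolding Q_def by simp
qed

lemma int_facts:
  fixes M :: "'a measure" and f :: "'b \<Rightarrow> 'a \<Rightarrow> real"
  assumes ps: "prob_space M" and fin: "finite K"
   and meas: "\<And>i. i\<in>K \<Longrightarrow> f i \<in> borel_measurable M"
   and nn: "\<And>i x. i\<in>K \<Longrightarrow> 0 \<le> f i x"
   and le1: "AE x in M. (\<Sum>i\<in>K. f i x) \<le> 1"
  shows "integrable M (\<lambda>x. (\<Sum>i\<in>K. f i x * ln (f i x)))"
    "integrable M (\<lambda>x. (\<Sum>i\<in>K. f i x) * ln (\<Sum>i\<in>K. f i x))"
    "integrable M (\<lambda>x. (\<Sum>i\<in>K. f i x))"
proof -
  interpret prob_space M by fact
  have b01: "AE x in M. 0 \<le> f i x \<and> f i x \<le> 1" if i: "i\<in>K" for i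
    using le1
  proof eventually_elim
    case (elim x)
    have "f i x \<le> (\<Sum>i\<in>K. f i x)" by (rule member_le_sum) (use i nn fin in auto)
    thus ?case using elim nn[OF i] by simp
  qed
  have int_fl: "integrable M (\<lambda>x. f i x * ln (f i x))" if "i\<in>K" for i
    using integrable01(2)[OF ps meas[OF that] b01[OF that]] .
  thus "integrable M (\<lambda>x. (\<Sum>i\<in>K. f i x * ln (f i x)))" by auto
  have measp: "(\<lambda>x. \<Sum>i\<in>K. f i x) \<in> borel_measurable M"
    by (rule borel_measurable_sum) (use meas in auto)
  have bp: "AE x in M. 0 \<le> (\<Sum>i\<in>K. f i x) \<and> (\<Sum>i\<in>K. f i x) \<le> 1"
    using le1 by eventually_elim (use nn in \<open>auto intro: sum_nonneg\<close>)
  show "integrable M (\<lambda>x. (\<Sum>i\<in>K. f i x) * ln (\<Sum>i\<in>K. f i x))"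
    using integrable01(2)[OF ps measp bp] .
  show "integrable M (\<lambda>x. (\<Sum>i\<in>K. f i x))"
    using integrable01(1)[OF ps measp bp] .
qed

lemma qform_adj_mult: "qform (adj A ** A) v = of_real (\<Sum>j\<in>UNIV. (cmod ((A *v v) $ j))^2)"
proof -
  define w where "w = A *v v"
  have "(adj A ** A) *v v = adj A *v w" unfolding w_def by (simp add: matrix_vector_mul_assoc)
  hence "qform (adj A ** A) v = (\<Sum>i\<in>UNIV. cnj (v $ i) * (\<Sum>j\<in>UNIV. cnj (A $ j $ i) * w $ j))"
    unfolding qform_def by (simp add: matrix_vector_mult_def adj_def)
  also have "\<dots> = (\<Sum>i\<in>UNIV. \<Sum>j\<in>UNIV. w $ j * cnj (A $ j $ i * v $ i))"
    by (simp add: sum_distrib_left mult_ac)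
  also have "\<dots> = (\<Sum>j\<in>UNIV. w $ j * cnj (\<Sum>i\<in>UNIV. A $ j $ i * v $ i))"
    by (subst sum.swap) (simp add: sum_distrib_left)
  also have "\<dots> = (\<Sum>j\<in>UNIV. w $ j * cnj (w $ j))"
    unfolding w_def by (simp add: matrix_vector_mult_def)
  also have "\<dots> = (\<Sum>j\<in>UNIV. of_real ((cmod (w $ j))^2))"
    by (rule sum.cong[OF refl]) (rule complex_norm_square[symmetric])
  finally show ?thesis unfolding w_def by (simp only: of_real_sum)
qed

lemma qform_add: "qform (A + B) v = qform A v + qform B v"
  unfolding qform_def by (simp add: matrix_vector_mult_add_rdistrib distrib_left sum.distrib)

lemma qform_zero: "qform 0 v = 0"
  unfolding qform_def by simp

lemma qform_sum: "qform (\<Sum>i\<in>S. A i) v = (\<Sum>i\<in>S. qform (A i) v)"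
  by (induction S rule: infinite_finite_induct) (simp_all add: qform_zero qform_add)

lemma qform_id: "qform (mat 1) v = of_real (\<Sum>i\<in>UNIV. (cmod (v $ i))^2)"
proof -
  have "qform (mat 1) v = (\<Sum>i\<in>UNIV. v $ i * cnj (v $ i))"
    unfolding qform_def by (simp add: mult.commute)
  also have "\<dots> = (\<Sum>i\<in>UNIV. of_real ((cmod (v $ i))^2))"
    by (rule sum.cong[OF refl]) (rule complex_norm_square[symmetric])
  finally show ?thesis by (simp only: of_real_sum)
qed

lemma norm1_sum: "norm (v :: complex ^ 'd) = 1 \<Longrightarrow> (\<Sum>i\<in>UNIV. (cmod (v $ i))^2) = 1"
  unfolding norm_vec_def L2_set_def by simp

lemma qform_CS: "(cmod (qform A v))^2 \<le> (\<Sum>i\<in>UNIV. (cmod (v $ i))^2) * (\<Sum>j\<in>UNIV. (cmod ((A *v v) $ j))^2)"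
proof -
  define w where "w = A *v v"
  have "cmod (qform A v) \<le> (\<Sum>i\<in>UNIV. cmod (v $ i) * cmod (w $ i))"
    unfolding qform_def w_def by (rule order_trans[OF norm_sum]) (simp add: norm_mult)
  also have "\<dots> \<le> L2_set (\<lambda>i. cmod (v $ i)) UNIV * L2_set (\<lambda>i. cmod (w $ i)) UNIV"
    using L2_set_mult_ineq[of "\<lambda>i. cmod (v $ i)" "\<lambda>i. cmod (w $ i)" UNIV] by simp
  finally have h: "cmod (qform A v) \<le> L2_set (\<lambda>i. cmod (v $ i)) UNIV * L2_set (\<lambda>i. cmod (w $ i)) UNIV" .
  have "(cmod (qform A v))^2 \<le> (L2_set (\<lambda>i. cmod (v $ i)) UNIV * L2_set (\<lambda>i. cmod (w $ i)) UNIV)^2"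
    by (rule power_mono[OF h]) simp
  also have "\<dots> = (\<Sum>i\<in>UNIV. (cmod (v $ i))^2) * (\<Sum>j\<in>UNIV. (cmod (w $ j))^2)"
    unfolding L2_set_def power_mult_distrib by (simp add: sum_nonneg)
  finally show ?thesis unfolding w_def .
qed

lemma qform_meas: "(\<lambda>v. Re (qform A v)) \<in> borel_measurable borel"
  unfolding qform_def matrix_vector_mult_def
  by (intro borel_measurable_continuous_onI continuous_intros)

lemma qform_meas2: "(\<lambda>v. (cmod (qform A v))^2) \<in> borel_measurable borel"
  unfolding qform_def matrix_vector_mult_def
  by (intro borel_measurable_continuous_onI continuous_intros)

definition refine :: "'d::finite mproc \<Rightarrow> 'd mproc" where
 "refine P = \<lparr>outcomes = prod_encode ` Sigma (outcomes P) (kidx P),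
   povm = (\<lambda>n. adj (kraus P (fst (prod_decode n)) (snd (prod_decode n))) ** kraus P (fst (prod_decode n)) (snd (prod_decode n))),
   kidx = (\<lambda>n. {0}),
   kraus = (\<lambda>n j. kraus P (fst (prod_decode n)) (snd (prod_decode n)))\<rparr>"

lemma reidx:
  assumes "finite B" "\<And>b. b \<in> B \<Longrightarrow> finite (K b)"
  shows "(\<Sum>n\<in>prod_encode ` Sigma B K. g n) = (\<Sum>b\<in>B. \<Sum>i\<in>K b. g (prod_encode (b,i)))"
proof -
  have "(\<Sum>n\<in>prod_encode ` Sigma B K. g n) = (\<Sum>x\<in>Sigma B K. g (prod_encode x))"
    by (subst sum.reindex[OF inj_prod_encode]) simp
  also have "\<dots> = (\<Sum>b\<in>B. \<Sum>i\<in>K b. g (prod_encode (b,i)))"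
    using sum.Sigma[OF assms(1), of K "\<lambda>b i. g (prod_encode (b,i))"] assms(2)
    by (simp add: case_prod_beta')
  finally show ?thesis .
qed

lemma refine_simps:
  "outcomes (refine P) = prod_encode ` Sigma (outcomes P) (kidx P)"
  "povm (refine P) (prod_encode (b,i)) = adj (kraus P b i) ** kraus P b i"
  "kidx (refine P) n = {0}"
  "kraus (refine P) (prod_encode (b,i)) j = kraus P b i"
  unfolding refine_def by simp_all

lemma psd_adj: "psd (adj A ** A)"
  unfolding psd_def qform_adj_mult by (simp add: sum_nonneg)

lemma Re_qadj_nn: "0 \<le> Re (qform (adj A ** A) v)"
  unfolding qform_adj_mult by (simp add: sum_nonneg)

lemma mp_refine:
  assumes mp: "measurement_procedure P"
  shows "measurement_procedure (refine P)"
proof -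
  have fo: "finite (outcomes P)" and fk: "\<And>b. b \<in> outcomes P \<Longrightarrow> finite (kidx P b)"
    and sk: "\<And>b. b \<in> outcomes P \<Longrightarrow> (\<Sum>i\<in>kidx P b. adj (kraus P b i) ** kraus P b i) = povm P b"
    and s1: "(\<Sum>b\<in>outcomes P. povm P b) = mat 1"
    using mp unfolding measurement_procedure_def by auto
  have "finite (outcomes (refine P))" using fo fk unfolding refine_simps by auto
  moreover have "\<forall>n\<in>outcomes (refine P). psd (povm (refine P) n)"
    unfolding refine_simps using psd_adj by (auto simp: refine_simps)
  moreover have "(\<Sum>n\<in>outcomes (refine P). povm (refine P) n) = mat 1"
    unfolding refine_simps(1) by (subst reidx[OF fo fk]) (use sk s1 in \<open>simp_all only: refine_simps, simp_all\<close>)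
  moreover have "\<forall>n\<in>outcomes (refine P). finite (kidx (refine P) n) \<and>
        (\<Sum>i\<in>kidx (refine P) n. adj (kraus (refine P) n i) ** kraus (refine P) n i) = povm (refine P) n"
    unfolding refine_simps(1) by (auto simp: refine_simps)
  ultimately show ?thesis unfolding measurement_procedure_def by blast
qed

lemma one_term_refine: "one_term (refine P)"
  unfolding one_term_def refine_simps by auto

lemma dist_refine:
  assumes mp: "measurement_procedure P"
  shows "disturbance \<mu> (refine P) = disturbance \<mu> P"
proof -
  have fo: "finite (outcomes P)" and fk: "\<And>b. b \<in> outcomes P \<Longrightarrow> finite (kidx P b)"
    using mp unfolding measurement_procedure_def by auto
  have "(\<Sum>n\<in>outcomes (refine P). \<Sum>i\<in>kidx (refine P) n. (cmod (qform (kraus (refine P) n i) \<psi>))^2)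
     = (\<Sum>b\<in>outcomes P. \<Sum>i\<in>kidx P b. (cmod (qform (kraus P b i) \<psi>))^2)" for \<psi>
    unfolding refine_simps(1) by (subst reidx[OF fo fk]) (simp_all only: refine_simps, simp_all)
  thus ?thesis unfolding disturbance_def by simp
qed

lemma meas_mu: "sets \<mu> = sets borel \<Longrightarrow> (\<lambda>v. Re (qform A v)) \<in> borel_measurable \<mu>"
  using qform_meas[of A] measurable_cong_sets[of \<mu> borel borel borel] by simp

lemma meas_mu2: "sets \<mu> = sets borel \<Longrightarrow> (\<lambda>v. (cmod (qform A v))^2) \<in> borel_measurable \<mu>"
  using qform_meas2[of A] measurable_cong_sets[of \<mu> borel borel borel] by simp

lemma pcond_sum:
  assumes mp: "measurement_procedure P" and b: "b \<in> outcomes P"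
  shows "pcond P b \<psi> = (\<Sum>i\<in>kidx P b. Re (qform (adj (kraus P b i) ** kraus P b i) \<psi>))"
proof -
  have "povm P b = (\<Sum>i\<in>kidx P b. adj (kraus P b i) ** kraus P b i)"
    using mp b unfolding measurement_procedure_def by auto
  thus ?thesis unfolding pcond_def by (simp add: qform_sum)
qed

lemma pcond_total:
  assumes mp: "measurement_procedure P" and n: "norm \<psi> = 1"
  shows "(\<Sum>b\<in>outcomes P. pcond P b \<psi>) = 1"
proof -
  have "(\<Sum>b\<in>outcomes P. povm P b) = mat 1"
    using mp unfolding measurement_procedure_def by auto
  hence "(\<Sum>b\<in>outcomes P. pcond P b \<psi>) = Re (qform (mat 1) \<psi>)"
    unfolding pcond_def by (metis Re_sum qform_sum)
  thus ?thesis using norm1_sum[OF n] by (simp add: qform_id)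
qed

lemma pcond_nn:
  assumes mp: "measurement_procedure P" and b: "b \<in> outcomes P"
  shows "0 \<le> pcond P b \<psi>"
  using mp b unfolding measurement_procedure_def psd_def pcond_def by auto

lemma info_refine:
  assumes pse: "pure_state_ensemble \<mu>" and mp: "measurement_procedure P"
  shows "info_gain \<mu> P \<le> info_gain \<mu> (refine P)"
proof -
  have ps: "prob_space \<mu>" and sb: "sets \<mu> = sets borel" and ae1: "AE \<psi> in \<mu>. norm \<psi> = 1"
    using pse unfolding pure_state_ensemble_def by auto
  have fo: "finite (outcomes P)" and fk: "\<And>b. b \<in> outcomes P \<Longrightarrow> finite (kidx P b)"
    using mp unfolding measurement_procedure_def by auto
  define f where "f b i \<psi> = Re (qform (adj (kraus P b i) ** kraus P b i) \<psi>)" for b i \<psi>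
  have meas: "f b i \<in> borel_measurable \<mu>" for b i
    unfolding f_def by (rule meas_mu[OF sb])
  have nn: "0 \<le> f b i \<psi>" for b i \<psi> unfolding f_def by (rule Re_qadj_nn)
  have ps_eq: "pcond P b \<psi> = (\<Sum>i\<in>kidx P b. f b i \<psi>)" if "b \<in> outcomes P" for b \<psi>
    unfolding f_def using pcond_sum[OF mp that] .
  have le1: "AE \<psi> in \<mu>. (\<Sum>i\<in>kidx P b. f b i \<psi>) \<le> 1" if b: "b \<in> outcomes P" for b
    using ae1
  proof eventually_elim
    case (elim \<psi>)
    have "pcond P b \<psi> \<le> (\<Sum>b\<in>outcomes P. pcond P b \<psi>)"
      by (rule member_le_sum) (use b fo pcond_nn[OF mp] in auto)
    thus ?case using pcond_total[OF mp elim] ps_eq[OF b] by simp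
  qed
  note G = gibbs_int[OF ps fk meas nn le1]
  note I1 = int_facts(1)[OF ps fk meas nn le1]
  note I2 = int_facts(2)[OF ps fk meas nn le1]
  have infoR: "info_gain \<mu> (refine P) = - (\<Sum>b\<in>outcomes P. \<Sum>i\<in>kidx P b. (\<integral>\<psi>. f b i \<psi> \<partial>\<mu>) * ln (\<integral>\<psi>. f b i \<psi> \<partial>\<mu>))
      + (\<integral>\<psi>. (\<Sum>b\<in>outcomes P. \<Sum>i\<in>kidx P b. f b i \<psi> * ln (f b i \<psi>)) \<partial>\<mu>)"
  proof -
    have e1: "(\<Sum>n\<in>outcomes (refine P). pout \<mu> (refine P) n * ln (pout \<mu> (refine P) n))
       = (\<Sum>b\<in>outcomes P. \<Sum>i\<in>kidx P b. (\<integral>\<psi>. f b i \<psi> \<partial>\<mu>) * ln (\<integral>\<psi>. f b i \<psi> \<partial>\<mu>))"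
      unfolding refine_simps(1) by (subst reidx[OF fo fk]) (simp_all only: pout_def pcond_def refine_simps f_def[abs_def])
    have e2: "(\<Sum>n\<in>outcomes (refine P). pcond (refine P) n \<psi> * ln (pcond (refine P) n \<psi>))
       = (\<Sum>b\<in>outcomes P. \<Sum>i\<in>kidx P b. f b i \<psi> * ln (f b i \<psi>))" for \<psi>
      unfolding refine_simps(1) by (subst reidx[OF fo fk]) (simp_all only: pout_def pcond_def refine_simps f_def)
    show ?thesis unfolding info_gain_def e1 e2 ..
  qed
  have infoP: "info_gain \<mu> P = - (\<Sum>b\<in>outcomes P. (\<integral>\<psi>. (\<Sum>i\<in>kidx P b. f b i \<psi>) \<partial>\<mu>) * ln (\<integral>\<psi>. (\<Sum>i\<in>kidx P b. f b i \<psi>) \<partial>\<mu>))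
      + (\<integral>\<psi>. (\<Sum>b\<in>outcomes P. (\<Sum>i\<in>kidx P b. f b i \<psi>) * ln (\<Sum>i\<in>kidx P b. f b i \<psi>)) \<partial>\<mu>)"
  proof -
    have e1: "(\<Sum>b\<in>outcomes P. pout \<mu> P b * ln (pout \<mu> P b))
      = (\<Sum>b\<in>outcomes P. (\<integral>\<psi>. (\<Sum>i\<in>kidx P b. f b i \<psi>) \<partial>\<mu>) * ln (\<integral>\<psi>. (\<Sum>i\<in>kidx P b. f b i \<psi>) \<partial>\<mu>))"
      by (rule sum.cong[OF refl]) (simp add: pout_def ps_eq)
    have e2: "(\<Sum>b\<in>outcomes P. pcond P b \<psi> * ln (pcond P b \<psi>))
      = (\<Sum>b\<in>outcomes P. (\<Sum>i\<in>kidx P b. f b i \<psi>) * ln (\<Sum>i\<in>kidx P b. f b i \<psi>))" for \<psi>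
      by (rule sum.cong[OF refl]) (simp add: ps_eq)
    show ?thesis unfolding info_gain_def e1 e2 ..
  qed
  have s1: "(\<integral>\<psi>. (\<Sum>b\<in>outcomes P. \<Sum>i\<in>kidx P b. f b i \<psi> * ln (f b i \<psi>)) \<partial>\<mu>)
     = (\<Sum>b\<in>outcomes P. (\<integral>\<psi>. (\<Sum>i\<in>kidx P b. f b i \<psi> * ln (f b i \<psi>)) \<partial>\<mu>))"
    by (rule Bochner_Integration.integral_sum) (rule I1)
  have s2: "(\<integral>\<psi>. (\<Sum>b\<in>outcomes P. (\<Sum>i\<in>kidx P b. f b i \<psi>) * ln (\<Sum>i\<in>kidx P b. f b i \<psi>)) \<partial>\<mu>)
     = (\<Sum>b\<in>outcomes P. (\<integral>\<psi>. (\<Sum>i\<in>kidx P b. f b i \<psi>) * ln (\<Sum>i\<in>kidx P b. f b i \<psi>) \<partial>\<mu>))"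
    by (rule Bochner_Integration.integral_sum) (rule I2)
  have "(\<Sum>b\<in>outcomes P. (\<Sum>i\<in>kidx P b. (\<integral>\<psi>. f b i \<psi> \<partial>\<mu>) * ln (\<integral>\<psi>. f b i \<psi> \<partial>\<mu>))
      - (\<integral>\<psi>. (\<Sum>i\<in>kidx P b. f b i \<psi>) \<partial>\<mu>) * ln (\<integral>\<psi>. (\<Sum>i\<in>kidx P b. f b i \<psi>) \<partial>\<mu>))
    \<le> (\<Sum>b\<in>outcomes P. (\<integral>\<psi>. (\<Sum>i\<in>kidx P b. f b i \<psi> * ln (f b i \<psi>)) \<partial>\<mu>)
      - (\<integral>\<psi>. (\<Sum>i\<in>kidx P b. f b i \<psi>) * ln (\<Sum>i\<in>kidx P b. f b i \<psi>) \<partial>\<mu>))"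
    by (rule sum_mono) (rule G)
  thus ?thesis unfolding infoR infoP s1 s2 sum_subtractf by linarith
qed

lemma dist_nonneg:
  assumes pse: "pure_state_ensemble \<mu>" and mp: "measurement_procedure P"
  shows "0 \<le> disturbance \<mu> P"
proof -
  have ps: "prob_space \<mu>" and ae1: "AE \<psi> in \<mu>. norm \<psi> = 1"
    using pse unfolding pure_state_ensemble_def by auto
  interpret prob_space \<mu> by fact
  have fo: "finite (outcomes P)" and fk: "\<And>b. b \<in> outcomes P \<Longrightarrow> finite (kidx P b)"
    using mp unfolding measurement_procedure_def by auto
  have le: "AE \<psi> in \<mu>. (\<Sum>b\<in>outcomes P. \<Sum>i\<in>kidx P b. (cmod (qform (kraus P b i) \<psi>))^2) \<le> 1"
    using ae1
  proof eventually_elim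
    case (elim \<psi>)
    have "(\<Sum>b\<in>outcomes P. \<Sum>i\<in>kidx P b. (cmod (qform (kraus P b i) \<psi>))^2)
       \<le> (\<Sum>b\<in>outcomes P. \<Sum>i\<in>kidx P b. Re (qform (adj (kraus P b i) ** kraus P b i) \<psi>))"
    proof (intro sum_mono)
      fix b i
      show "(cmod (qform (kraus P b i) \<psi>))^2 \<le> Re (qform (adj (kraus P b i) ** kraus P b i) \<psi>)"
        using qform_CS[of "kraus P b i" \<psi>] norm1_sum[OF elim] by (simp add: qform_adj_mult)
    qed
    also have "\<dots> = (\<Sum>b\<in>outcomes P. pcond P b \<psi>)"
      by (rule sum.cong[OF refl]) (simp add: pcond_sum[OF mp])
    also have "\<dots> = 1" by (rule pcond_total[OF mp elim])
    finally show ?case .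
  qed
  show ?thesis
  proof (cases "integrable \<mu> (\<lambda>\<psi>. \<Sum>b\<in>outcomes P. \<Sum>i\<in>kidx P b. (cmod (qform (kraus P b i) \<psi>))^2)")
    case True
    thus ?thesis unfolding disturbance_def using integral_le_const[OF True le] by simp
  next
    case False
    thus ?thesis unfolding disturbance_def by (simp add: not_integrable_integral_eq)
  qed
qed

theorem mainTheorem3:
  fixes \<mu> :: "(complex ^ 'd::finite) measure" and I :: real
  assumes "pure_state_ensemble \<mu>"
    and "achievable \<mu> I"
    and "\<forall>I'. achievable \<mu> I' \<and> I' > I \<longrightarrow> Dfront \<mu> I' > Dfront \<mu> I"
    and "\<exists>P::'d mproc. measurement_procedure P \<and> info_gain \<mu> P = I
           \<and> disturbance \<mu> P = Dfront \<mu> I"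
  shows "\<exists>Q::'d mproc. measurement_procedure Q \<and> one_term Q \<and> info_gain \<mu> Q = I
           \<and> disturbance \<mu> Q = Dfront \<mu> I"
proof -
  obtain P :: "'d mproc" where mp: "measurement_procedure P" and iP: "info_gain \<mu> P = I"
    and dP: "disturbance \<mu> P = Dfront \<mu> I" using assms(4) by blast
  define Q where "Q = refine P"
  have mQ: "measurement_procedure Q" unfolding Q_def by (rule mp_refine[OF mp])
  have oQ: "one_term Q" unfolding Q_def by (rule one_term_refine)
  have dQ: "disturbance \<mu> Q = Dfront \<mu> I" unfolding Q_def dist_refine[OF mp] by (rule dP)
  have iQ: "I \<le> info_gain \<mu> Q" unfolding Q_def using info_refine[OF assms(1) mp] iP by simp
  show ?thesis
  proof (cases "info_gain \<mu> Q = I")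
    case True
    thus ?thesis using mQ oQ dQ by blast
  next
    case False
    hence gt: "info_gain \<mu> Q > I" using iQ by simp
    have "achievable \<mu> (info_gain \<mu> Q)" unfolding achievable_def using mQ by blast
    hence lt: "Dfront \<mu> (info_gain \<mu> Q) > Dfront \<mu> I" using assms(3) gt by blast
    have "Dfront \<mu> (info_gain \<mu> Q) \<le> disturbance \<mu> Q"
      unfolding Dfront_def
    proof (rule cInf_lower)
      show "disturbance \<mu> Q \<in> {disturbance \<mu> P |P::'d mproc. measurement_procedure P \<and> info_gain \<mu> P = info_gain \<mu> Q}"
        using mQ by blast
      show "bdd_below {disturbance \<mu> P |P::'d mproc. measurement_procedure P \<and> info_gain \<mu> P = info_gain \<mu> Q}"
        by (rule bdd_belowI[where m=0]) (use dist_nonneg[OF assms(1)] in blast)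
    qed
    thus ?thesis using lt dQ by simp
  qed
qed

end
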